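(* Let $d\ge2$ and $r>2d-2$. Then for every $f\in\mathcal C_r(\mathbb R^{2d})$ the integral $\int_{\Sigma_*}f(z)|z|^{-1}\,dz|_{\Sigma_*}$ converges absolutely, and $f\mapsto\int_{\Sigma_*}f(z)|z|^{-1}dz|_{\Sigma_*}$ is a continuous linear functional on $\mathcal C_r(\mathbb R^{2d})$.
   Context: $\Sigma_*=\{z=(x,y)\in\mathbb R^d\times\mathbb R^d: x\cdot y=0,\ z\ne0\}$, a smooth hypersurface of $\mathbb R^{2d}$, and $dz|_{\Sigma_*}$ its volume element induced from Euclidean $\mathbb R^{2d}$. $\mathcal C_r(\mathbb R^{n})$ is the space of continuous complex functions $f$ on $\mathbb R^n$ with finite norm $|f|_r=\sup_z|f(z)|\langle z\rangle^r$, $\langle z\rangle=(1+|z|^2)^{1/2}$. *)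

theory Defs
  imports "HOL-Analysis.Analysis"
begin

text \<open>The normalising constant is omega_s / 2^s, omega_s = pi^(s/2)/Gamma(s/2+1),
  so that on a smooth k-dimensional submanifold of Euclidean space the
  k-dimensional Hausdorff measure is the induced Riemannian volume.\<close>

definition hausdorff_const :: "real \<Rightarrow> real" where
  "hausdorff_const s = pi powr (s / 2) / Gamma (s / 2 + 1) / 2 powr s"

definition hausdorff_pre :: "real \<Rightarrow> real \<Rightarrow> 'a::metric_space set \<Rightarrow> ennreal" where
  "hausdorff_pre s \<delta> A =
     (INF C \<in> {C :: nat \<Rightarrow> 'a set. A \<subseteq> (\<Union>i. C i) \<and>
                  (\<forall>i. bounded (C i) \<and> diameter (C i) \<le> \<delta>)}.
        (\<Sum>i. ennreal (hausdorff_const s * diameter (C i) powr s)))"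

definition hausdorff_outer :: "real \<Rightarrow> 'a::metric_space set \<Rightarrow> ennreal" where
  "hausdorff_outer s A = (SUP \<delta> \<in> {0<..}. hausdorff_pre s \<delta> A)"

definition hausdorff_measure :: "real \<Rightarrow> 'a::metric_space measure" where
  "hausdorff_measure s = measure_of UNIV (sets borel) (hausdorff_outer s)"

definition Sigma_star :: "((real^'n) \<times> (real^'n)) set" where
  "Sigma_star = {(x, y). x \<bullet> y = 0 \<and> (x, y) \<noteq> 0}"

text \<open>Surface measure dz|Sigma_* : (2d-1)-dimensional Hausdorff measure on R^{2d}
  (integrals over Sigma_* are taken as set integrals over Sigma_star).\<close>

definition surf_measure :: "((real^'n) \<times> (real^'n)) measure" where
  "surf_measure = hausdorff_measure (real (2 * CARD('n) - 1))"

definition japanese :: "'a::real_normed_vector \<Rightarrow> real" where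
  "japanese z = sqrt (1 + (norm z)\<^sup>2)"

definition Cr_norm :: "real \<Rightarrow> ('a::real_normed_vector \<Rightarrow> complex) \<Rightarrow> real" where
  "Cr_norm r f = (SUP z. cmod (f z) * japanese z powr r)"

definition Cr_space :: "real \<Rightarrow> ('a::real_normed_vector \<Rightarrow> complex) set" where
  "Cr_space r = {f. continuous_on UNIV f \<and> bdd_above (range (\<lambda>z. cmod (f z) * japanese z powr r))}"

definition Sigma_functional :: "((real^'n) \<times> (real^'n) \<Rightarrow> complex) \<Rightarrow> complex" where
  "Sigma_functional f = (LINT z : Sigma_star | surf_measure. f z / complex_of_real (norm z))"

end

theory Submission
  imports Defs
begin


definition good :: "real \<Rightarrow> real \<Rightarrow> 'a::metric_space set \<Rightarrow> bool" where
 "good s K D \<longleftrightarrow> (\<forall>\<delta>>0. \<exists>C::nat \<Rightarrow> 'a set. D \<subseteq> (\<Union>i. C i) \<and> (\<forall>i. bounded (C i) \<and> diameter (C i) \<le> \<delta>)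
     \<and> (\<Sum>i. ennreal (hausdorff_const s * diameter (C i) powr s)) \<le> ennreal K)"

lemma good_outer: "good s K D \<Longrightarrow> hausdorff_outer s D \<le> ennreal K"
  unfolding hausdorff_outer_def hausdorff_pre_def good_def
proof (intro SUP_least)
  fix \<delta> :: real assume "\<forall>\<delta>>0. \<exists>C::nat \<Rightarrow> 'a set. D \<subseteq> (\<Union>i. C i) \<and> (\<forall>i. bounded (C i) \<and> diameter (C i) \<le> \<delta>)
     \<and> (\<Sum>i. ennreal (hausdorff_const s * diameter (C i) powr s)) \<le> ennreal K" "\<delta> \<in> {0<..}"
  then obtain C :: "nat \<Rightarrow> 'a set" where C: "D \<subseteq> (\<Union>i. C i)" "\<forall>i. bounded (C i) \<and> diameter (C i) \<le> \<delta>"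
     "(\<Sum>i. ennreal (hausdorff_const s * diameter (C i) powr s)) \<le> ennreal K" by auto
  show "(INF C \<in> {C :: nat \<Rightarrow> 'a set. D \<subseteq> (\<Union>i. C i) \<and>
                  (\<forall>i. bounded (C i) \<and> diameter (C i) \<le> \<delta>)}.
        (\<Sum>i. ennreal (hausdorff_const s * diameter (C i) powr s))) \<le> ennreal K"
    by (rule INF_lower2[of C]) (use C in auto)
qed

lemma good_mono: "good s K D \<Longrightarrow> A \<subseteq> D \<Longrightarrow> good s K A"
  unfolding good_def by (meson order_trans)

lemma hc_nonneg: "s > 0 \<Longrightarrow> hausdorff_const s \<ge> 0"
  unfolding hausdorff_const_def by (intro divide_nonneg_nonneg) auto

lemma good_lip:
  fixes h :: "'a::metric_space \<Rightarrow> 'b::metric_space"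
  assumes g: "good s K D" and L: "L > 0" and s: "s > 0"
    and lip: "\<And>u v. u \<in> D \<Longrightarrow> v \<in> D \<Longrightarrow> dist (h u) (h v) \<le> L * dist u v"
  shows "good s (L powr s * K) (h ` D)"
  unfolding good_def
proof (intro allI impI)
  fix \<delta> :: real assume "\<delta> > 0"
  then have "\<delta> / L > 0" using L by simp
  then obtain C :: "nat \<Rightarrow> 'a set" where C: "D \<subseteq> (\<Union>i. C i)" "\<And>i. bounded (C i)" "\<And>i. diameter (C i) \<le> \<delta> / L"
     and S: "(\<Sum>i. ennreal (hausdorff_const s * diameter (C i) powr s)) \<le> ennreal K"
    using g unfolding good_def by meson
  define C' where "C' i = h ` (C i \<inter> D)" for i
  have dC': "diameter (C' i) \<le> L * diameter (C i)" and bC': "bounded (C' i)" for i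
  proof -
    have *: "dist a b \<le> L * diameter (C i)" if ab: "a \<in> C' i" "b \<in> C' i" for a b
    proof -
      obtain u where u: "u \<in> C i" "u \<in> D" "a = h u" using ab(1) unfolding C'_def by auto
      obtain v where v: "v \<in> C i" "v \<in> D" "b = h v" using ab(2) unfolding C'_def by auto
      note uv = u(1,2) v(1,2) u(3) v(3)
      have "dist a b \<le> L * dist u v" using lip uv by auto
      also have "\<dots> \<le> L * diameter (C i)"
        using diameter_bounded_bound[OF C(2) uv(1) uv(3)] L by simp
      finally show ?thesis .
    qed
    have nn: "0 \<le> L * diameter (C i)" using L diameter_ge_0[OF C(2)] by simp
    show "diameter (C' i) \<le> L * diameter (C i)"
    proof (cases "C' i = {}")
      case True then show ?thesis using nn by simp
    next
      case False
      then show ?thesis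
        apply (subst diameter_def)
        using * by (auto intro!: cSUP_least)
    qed
    show "bounded (C' i)"
    proof (cases "C' i = {}")
      case True then show ?thesis by simp
    next
      case False
      then obtain a where "a \<in> C' i" by auto
      then show ?thesis unfolding bounded_def using * by blast
    qed
  qed
  show "\<exists>C::nat \<Rightarrow> 'b set. h ` D \<subseteq> (\<Union>i. C i) \<and> (\<forall>i. bounded (C i) \<and> diameter (C i) \<le> \<delta>)
     \<and> (\<Sum>i. ennreal (hausdorff_const s * diameter (C i) powr s)) \<le> ennreal (L powr s * K)"
  proof (intro exI[of _ C'] conjI allI)
    show "h ` D \<subseteq> (\<Union>i. C' i)" using C(1) unfolding C'_def by blast
    show "bounded (C' i)" for i by (rule bC')
    show "diameter (C' i) \<le> \<delta>" for i
      using dC'[of i] C(3)[of i] L by (simp add: field_simps)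
    have hc: "hausdorff_const s \<ge> 0" using hc_nonneg[OF s] .
    have "(\<Sum>i. ennreal (hausdorff_const s * diameter (C' i) powr s))
        \<le> (\<Sum>i. ennreal (L powr s) * ennreal (hausdorff_const s * diameter (C i) powr s))"
    proof (rule suminf_le[OF _ summableI summableI])
      fix i
      have "diameter (C' i) powr s \<le> (L * diameter (C i)) powr s"
        by (rule powr_mono2) (use s dC' diameter_ge_0[OF bC'] in auto)
      also have "\<dots> = L powr s * diameter (C i) powr s"
        using L diameter_ge_0[OF C(2)] by (simp add: powr_mult)
      finally have "hausdorff_const s * diameter (C' i) powr s \<le> L powr s * (hausdorff_const s * diameter (C i) powr s)"
        using hc by (simp add: mult_left_mono mult.left_commute)
      then show "ennreal (hausdorff_const s * diameter (C' i) powr s)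
        \<le> ennreal (L powr s) * ennreal (hausdorff_const s * diameter (C i) powr s)"
      proof -
        have "ennreal (hausdorff_const s * diameter (C' i) powr s) \<le> ennreal (L powr s * (hausdorff_const s * diameter (C i) powr s))"
          by (rule ennreal_leI) fact
        also have "\<dots> = ennreal (L powr s) * ennreal (hausdorff_const s * diameter (C i) powr s)"
          by (rule ennreal_mult'') (use hc in simp)
        finally show ?thesis .
      qed
    qed
    also have "\<dots> = ennreal (L powr s) * (\<Sum>i. ennreal (hausdorff_const s * diameter (C i) powr s))"
      by simp
    also have "\<dots> \<le> ennreal (L powr s) * ennreal K"
      by (rule mult_left_mono[OF S]) simp
    also have "\<dots> = ennreal (L powr s * K)"
      by (simp add: ennreal_mult')
    finally show "(\<Sum>i. ennreal (hausdorff_const s * diameter (C' i) powr s)) \<le> ennreal (L powr s * K)" .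
  qed
qed

lemma good_finite:
  fixes C :: "'j \<Rightarrow> 'a::metric_space set"
  assumes s: "s > 0" and d: "\<delta> \<ge> 0" and J: "finite J" and A: "A \<subseteq> (\<Union>j\<in>J. C j)"
    and b: "\<And>j. j \<in> J \<Longrightarrow> bounded (C j) \<and> diameter (C j) \<le> \<delta>"
  shows "\<exists>C'::nat \<Rightarrow> 'a set. A \<subseteq> (\<Union>i. C' i) \<and> (\<forall>i. bounded (C' i) \<and> diameter (C' i) \<le> \<delta>)
     \<and> (\<Sum>i. ennreal (hausdorff_const s * diameter (C' i) powr s)) = (\<Sum>j\<in>J. ennreal (hausdorff_const s * diameter (C j) powr s))"
proof -
  obtain h where h: "bij_betw h {0..<card J} J" using ex_bij_betw_nat_finite[OF J] by blast
  define C' where "C' n = (if n < card J then C (h n) else {})" for n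
  show ?thesis
  proof (intro exI[of _ C'] conjI allI)
    show "A \<subseteq> (\<Union>i. C' i)"
    proof
      fix x assume "x \<in> A"
      then obtain j where j: "j \<in> J" "x \<in> C j" using A by auto
      then obtain n where "n \<in> {0..<card J}" "h n = j" using h by (metis bij_betw_iff_bijections)
      then show "x \<in> (\<Union>i. C' i)" using j unfolding C'_def by (intro UN_I[of n]) auto
    qed
    show "bounded (C' i)" "diameter (C' i) \<le> \<delta>" for i
      using b[of "h i"] bij_betw_apply[OF h, of i] d unfolding C'_def by auto
    have "(\<Sum>i. ennreal (hausdorff_const s * diameter (C' i) powr s)) = (\<Sum>i<card J. ennreal (hausdorff_const s * diameter (C' i) powr s))"
      by (rule suminf_finite) (use s in \<open>auto simp: C'_def\<close>)
    also have "\<dots> = (\<Sum>i\<in>{0..<card J}. ennreal (hausdorff_const s * diameter (C (h i)) powr s))"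
      by (intro sum.cong) (auto simp: C'_def)
    also have "\<dots> = (\<Sum>j\<in>J. ennreal (hausdorff_const s * diameter (C j) powr s))"
      using sum.reindex_bij_betw[OF h, of "\<lambda>j. ennreal (hausdorff_const s * diameter (C j) powr s)"] .
    finally show "(\<Sum>i. ennreal (hausdorff_const s * diameter (C' i) powr s)) = (\<Sum>j\<in>J. ennreal (hausdorff_const s * diameter (C j) powr s))" .
  qed
qed

definition flat :: "'n::finite \<Rightarrow> ((real^'n) \<times> (real^'n)) set" where
  "flat i = {z. (\<forall>j. \<bar>fst z $ j\<bar> \<le> 4 \<and> \<bar>snd z $ j\<bar> \<le> 4) \<and> snd z $ i = 0}"

definition cell :: "nat \<Rightarrow> ('n::finite \<Rightarrow> int) \<times> ('n \<Rightarrow> int) \<Rightarrow> ((real^'n) \<times> (real^'n)) set" where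
  "cell N p = {z. \<forall>j. of_int (fst p j) \<le> real N * fst z $ j \<and> real N * fst z $ j \<le> of_int (fst p j) + 1
      \<and> of_int (snd p j) \<le> real N * snd z $ j \<and> real N * snd z $ j \<le> of_int (snd p j) + 1}"

lemma cell_dist:
  fixes z w :: "(real^'n::finite) \<times> (real^'n)"
  assumes N: "N > 0" and z: "z \<in> cell N p" and w: "w \<in> cell N p"
  shows "dist z w \<le> 2 * CARD('n) / N"
proof -
  have c1: "\<bar>fst z $ j - fst w $ j\<bar> \<le> 1 / N" and c2: "\<bar>snd z $ j - snd w $ j\<bar> \<le> 1 / N" for j
  proof -
    have "\<bar>real N * fst z $ j - real N * fst w $ j\<bar> \<le> 1" "\<bar>real N * snd z $ j - real N * snd w $ j\<bar> \<le> 1"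
      using z w unfolding cell_def by (auto dest!: spec[of _ j])
    then show "\<bar>fst z $ j - fst w $ j\<bar> \<le> 1 / N" "\<bar>snd z $ j - snd w $ j\<bar> \<le> 1 / N"
    proof -
      note that = \<open>\<bar>real N * fst z $ j - real N * fst w $ j\<bar> \<le> 1\<close> \<open>\<bar>real N * snd z $ j - real N * snd w $ j\<bar> \<le> 1\<close>
      have e: "\<bar>real N * a - real N * b\<bar> = \<bar>a - b\<bar> * N" for a b :: real
        by (simp add: right_diff_distrib[symmetric] abs_mult)
      show "\<bar>fst z $ j - fst w $ j\<bar> \<le> 1 / N" "\<bar>snd z $ j - snd w $ j\<bar> \<le> 1 / N"
        using that N by (simp_all only: e pos_le_divide_eq of_nat_0_less_iff)
    qed
  qed
  have "dist z w = norm (fst z - fst w, snd z - snd w)"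
    by (cases z, cases w) (simp add: dist_norm)
  also have "\<dots> \<le> norm (fst z - fst w) + norm (snd z - snd w)" by (rule norm_Pair_le)
  also have "\<dots> \<le> (\<Sum>j\<in>UNIV. \<bar>(fst z - fst w) $ j\<bar>) + (\<Sum>j\<in>UNIV. \<bar>(snd z - snd w) $ j\<bar>)"
    by (intro add_mono norm_le_l1_cart)
  also have "\<dots> \<le> (\<Sum>j\<in>(UNIV::'n set). 1 / N) + (\<Sum>j\<in>(UNIV::'n set). 1 / N)"
    using c1 c2 by (intro add_mono sum_mono) auto
  also have "\<dots> = 2 * CARD('n) / N" by simp
  finally show ?thesis .
qed

lemma dist_bounded_diam:
  fixes S :: "'a::metric_space set"
  assumes "\<And>x y. x \<in> S \<Longrightarrow> y \<in> S \<Longrightarrow> dist x y \<le> e" "e \<ge> 0"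
  shows "bounded S \<and> diameter S \<le> e"
proof (cases "S = {}")
  case True then show ?thesis using assms by simp
next
  case False
  then obtain a where "a \<in> S" by auto
  then have "bounded S" unfolding bounded_def using assms by blast
  moreover have "diameter S \<le> e"
    using False apply (subst diameter_def) using assms by (auto intro!: cSUP_least)
  ultimately show ?thesis by simp
qed

lemma nat_sym: "nat (2 * int a + 1) = Suc (2 * a)"
  by arith

lemma card_sym_int: "card {- int a..int a} = 2 * a + 1"
  by simp

lemma good_flat:
  fixes i :: "'n::finite"
  shows "good (real (2 * CARD('n) - 1)) (hausdorff_const (real (2 * CARD('n) - 1)) * (18 * real CARD('n)) ^ (2 * CARD('n) - 1)) (flat i)"
  unfolding good_def
proof (intro allI impI)
  define d where "d = CARD('n)"
  define m where "m = 2 * d - 1"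
  have d1: "d \<ge> 1" unfolding d_def by (simp add: Suc_leI)
  have m0: "real m > 0" unfolding m_def using d1 by simp
  have hc: "hausdorff_const (real m) \<ge> 0" using hc_nonneg[OF m0] .
  fix \<delta> :: real assume \<delta>: "\<delta> > 0"
  define N :: nat where "N = nat \<lceil>2 * d / \<delta>\<rceil> + 1"
  have N1: "N \<ge> 1" unfolding N_def by simp
  have "2 * d / \<delta> \<le> real N" unfolding N_def by linarith
  then have Nd: "2 * real d / real N \<le> \<delta>" using \<delta> N1 by (simp add: field_simps)
  define a where "a = 4 * N"
  define J where "J = (PiE UNIV (\<lambda>_::'n. {- int a..int a})) \<times> (PiE UNIV (\<lambda>j::'n. if j = i then {0} else {- int a..int a}))"
  have finJ: "finite J" unfolding J_def by (intro finite_cartesian_product finite_PiE) auto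
  have cover: "flat i \<subseteq> (\<Union>p\<in>J. cell N p)"
  proof
    fix z assume z: "z \<in> flat i"
    define p where "p = ((\<lambda>j. \<lfloor>real N * fst z $ j\<rfloor>), (\<lambda>j. \<lfloor>real N * snd z $ j\<rfloor>))"
    have rng: "\<lfloor>real N * t\<rfloor> \<in> {- int a..int a}" if "\<bar>t\<bar> \<le> 4" for t
    proof -
      have "- (4 * real N) \<le> real N * t" "real N * t \<le> 4 * real N"
      proof -
        have "real N * (-t) \<le> real N * 4" "real N * t \<le> real N * 4"
          using that by (intro mult_left_mono; simp)+
        then show "- (4 * real N) \<le> real N * t" "real N * t \<le> 4 * real N" by linarith+
      qed
      then have "\<lfloor>real_of_int (- int a)\<rfloor> \<le> \<lfloor>real N * t\<rfloor>" "\<lfloor>real N * t\<rfloor> \<le> \<lfloor>real a\<rfloor>"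
        unfolding a_def by (auto intro!: floor_mono)
      then show ?thesis using floor_of_int[of "- int a", where ?'a=real] by simp
    qed
    have "p \<in> J" unfolding J_def p_def using z rng unfolding flat_def by (auto simp: PiE_iff)
    moreover have "z \<in> cell N p" unfolding cell_def p_def by (simp add: of_int_floor_le real_of_int_floor_add_one_ge)
    ultimately show "z \<in> (\<Union>p\<in>J. cell N p)" by blast
  qed
  have bd: "bounded (cell N p) \<and> diameter (cell N p) \<le> 2 * real d / real N" for p :: "('n \<Rightarrow> int) \<times> ('n \<Rightarrow> int)"
  proof (rule dist_bounded_diam)
    fix x y assume "x \<in> cell N p" "y \<in> cell N p"
    then show "dist x y \<le> 2 * real d / real N" using cell_dist[of N x p y] N1 by (simp add: d_def)
  qed simp
  obtain C' :: "nat \<Rightarrow> _" where C': "flat i \<subseteq> (\<Union>i. C' i)" "\<forall>i. bounded (C' i) \<and> diameter (C' i) \<le> \<delta>"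
    "(\<Sum>i. ennreal (hausdorff_const (real m) * diameter (C' i) powr real m)) = (\<Sum>p\<in>J. ennreal (hausdorff_const (real m) * diameter (cell N p) powr real m))"
  proof -
    have "\<And>p. p \<in> J \<Longrightarrow> bounded (cell N p) \<and> diameter (cell N p) \<le> \<delta>" using bd Nd by (meson order_trans)
    from good_finite[OF m0 _ finJ cover this] \<delta> show ?thesis using that by (meson less_imp_le)
  qed
  have "(\<Sum>p\<in>J. ennreal (hausdorff_const (real m) * diameter (cell N p) powr real m)) \<le> (\<Sum>p\<in>J. ennreal (hausdorff_const (real m) * (2 * real d / real N) powr real m))"
  proof (intro sum_mono ennreal_leI mult_left_mono hc powr_mono2)
    fix p :: "('n \<Rightarrow> int) \<times> ('n \<Rightarrow> int)" show "diameter (cell N p) \<le> 2 * real d / real N" using bd by simp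
    show "0 \<le> diameter (cell N p)" using bd diameter_ge_0 by blast
  qed (use m0 in auto)
  also have "\<dots> = ennreal (real (card J) * (hausdorff_const (real m) * (2 * real d / real N) powr real m))"
    by (simp add: ennreal_mult' ennreal_of_nat_eq_real_of_nat)
  also have "\<dots> \<le> ennreal (hausdorff_const (real m) * (18 * real d) ^ m)"
  proof (rule ennreal_leI)
    have cJ: "card J = (2 * a + 1) ^ d * (2 * a + 1) ^ (d - 1)"
    proof -
      have "card J = (\<Prod>j\<in>(UNIV::'n set). card {- int a..int a}) * (\<Prod>j\<in>(UNIV::'n set). card (if j = i then {0} else {- int a..int a}))"
        unfolding J_def by (simp add: card_cartesian_product card_PiE)
      also have "(\<Prod>j\<in>(UNIV::'n set). card (if j = i then {0} else {- int a..int a})) = (2 * a + 1) ^ (d - 1)"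
      proof -
        have "(\<Prod>j\<in>(UNIV::'n set). card (if j = i then {0} else {- int a..int a}))
            = card (if i = i then {0} else {- int a..int a}) * (\<Prod>j\<in>(UNIV::'n set) - {i}. card (if j = i then {0} else {- int a..int a}))"
          by (rule prod.remove) auto
        also have "\<dots> = (\<Prod>j\<in>(UNIV::'n set) - {i}. 2 * a + 1)"
          proof -
          have "card (if i = i then {0} else {- int a..int a}) = 1" by simp
          moreover have "(\<Prod>j\<in>UNIV - {i}. card (if j = i then {0} else {- int a..int a})) = (\<Prod>j\<in>(UNIV::'n set) - {i}. 2 * a + 1)"
            by (rule prod.cong[OF refl]) (use card_sym_int[of a] in auto)
          ultimately show ?thesis by simp
        qed
        also have "\<dots> = (2 * a + 1) ^ (d - 1)" proof -
          show ?thesis by (simp add: d_def card_Diff_singleton)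
        qed
        finally show ?thesis .
      qed
      finally show ?thesis by (simp add: d_def nat_sym)
    qed
    have "card J = (2 * a + 1) ^ m" unfolding cJ m_def using d1
      by (simp add: power_add[symmetric] mult_2)
    then have "real (card J) \<le> (9 * real N) ^ m"
    proof -
      have "real (2 * a + 1) \<le> 9 * real N" unfolding a_def using N1 by simp
      then have "real (2 * a + 1) ^ m \<le> (9 * real N) ^ m" by (rule power_mono) simp
      then show ?thesis using \<open>card J = (2 * a + 1) ^ m\<close> by simp
    qed
    have pw: "(2 * real d / real N) powr real m = (2 * real d / real N) ^ m"
      using d1 N1 by (intro powr_realpow) auto
    have "real (card J) * (hausdorff_const (real m) * (2 * real d / real N) powr real m)
        \<le> (9 * real N) ^ m * (hausdorff_const (real m) * (2 * real d / real N) ^ m)"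
      using pw hc \<open>real (card J) \<le> (9 * real N) ^ m\<close> by (simp add: mult_right_mono)
    also have "\<dots> = hausdorff_const (real m) * (9 * real N * (2 * real d / real N)) ^ m"
      by (simp only: power_mult_distrib mult_ac)
    also have "9 * real N * (2 * real d / real N) = 18 * real d" using N1 by simp
    finally show "real (card J) * (hausdorff_const (real m) * (2 * real d / real N) powr real m) \<le> hausdorff_const (real m) * (18 * real d) ^ m" .
  qed
  finally show "\<exists>C::nat \<Rightarrow> _ set. flat i \<subseteq> (\<Union>i. C i) \<and> (\<forall>i. bounded (C i) \<and> diameter (C i) \<le> \<delta>)
     \<and> (\<Sum>i. ennreal (hausdorff_const (real (2 * CARD('n) - 1)) * diameter (C i) powr (real (2 * CARD('n) - 1)))) \<le> ennreal (hausdorff_const (real (2 * CARD('n) - 1)) * (18 * real CARD('n)) ^ (2 * CARD('n) - 1))"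
    using C' unfolding m_def d_def by auto
qed



definition phi :: "'n::finite \<Rightarrow> (real^'n) \<times> (real^'n) \<Rightarrow> (real^'n) \<times> (real^'n)" where
  "phi i z = (fst z, snd z - ((fst z \<bullet> snd z) / fst z $ i) *\<^sub>R axis i 1)"

definition Dom :: "'n::finite \<Rightarrow> real \<Rightarrow> ((real^'n) \<times> (real^'n)) set" where
  "Dom i c = {z. c \<le> \<bar>fst z $ i\<bar> \<and> norm (fst z) \<le> 2 \<and> norm (snd z) \<le> 4 \<and> snd z $ i = 0}"

lemma Dom_flat: "Dom i c \<subseteq> flat i"
  unfolding Dom_def flat_def using component_le_norm_cart order_trans
  by (smt (verit, ccfv_SIG) mem_Collect_eq subsetI)

lemma phi_lip:
  fixes i :: "'n::finite"
  assumes c: "c > 0" and u: "u \<in> Dom i c" and v: "v \<in> Dom i c"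
  shows "dist (phi i u) (phi i v) \<le> (1 + 20 / c\<^sup>2) * dist u v"
proof -
  obtain x y where uxy: "u = (x, y)" by (cases u)
  obtain x' y' where vxy: "v = (x', y')" by (cases v)
  define \<delta> where "\<delta> = dist u v"
  have dx: "norm (x - x') \<le> \<delta>" and dy: "norm (y - y') \<le> \<delta>"
    unfolding \<delta>_def uxy vxy dist_norm using norm_fst_le[of "x - x'" "y - y'"] norm_snd_le[of "y - y'" "x - x'"]
    by auto
  have nx: "norm x \<le> 2" "norm y \<le> 4" "c \<le> \<bar>x $ i\<bar>" and nx': "norm x' \<le> 2" "norm y' \<le> 4" "c \<le> \<bar>x' $ i\<bar>"
    using u v unfolding Dom_def uxy vxy by auto
  define p where "p = x \<bullet> y"
  define p' where "p' = x' \<bullet> y'"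
  define a where "a = x $ i"
  define a' where "a' = x' $ i"
  have hp: "\<bar>p\<bar> \<le> 8"
  proof -
    have "\<bar>p\<bar> \<le> norm x * norm y" unfolding p_def by (rule Cauchy_Schwarz_ineq2)
    also have "\<dots> \<le> 2 * 4" using nx by (intro mult_mono) auto
    finally show ?thesis by simp
  qed
  have ha: "\<bar>a\<bar> \<le> 2" unfolding a_def using component_le_norm_cart[of x i] nx by linarith
  have haa: "\<bar>a' - a\<bar> \<le> \<delta>" unfolding a_def a'_def
    using component_le_norm_cart[of "x' - x" i] dx norm_minus_commute[of x x'] by simp
  have hpp: "\<bar>p - p'\<bar> \<le> 6 * \<delta>"
  proof -
    have "p - p' = (x - x') \<bullet> y + x' \<bullet> (y - y')" unfolding p_def p'_def
      by (simp add: inner_diff_left inner_diff_right)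
    then have "\<bar>p - p'\<bar> \<le> \<bar>(x - x') \<bullet> y\<bar> + \<bar>x' \<bullet> (y - y')\<bar>" by simp
    also have "\<dots> \<le> norm (x - x') * norm y + norm x' * norm (y - y')"
      by (intro add_mono Cauchy_Schwarz_ineq2)
    also have "\<dots> \<le> \<delta> * 4 + 2 * \<delta>"
      using dx dy nx nx' by (intro add_mono mult_mono) (auto simp: \<delta>_def)
    finally show ?thesis by simp
  qed
  have cc: "c\<^sup>2 \<le> \<bar>a * a'\<bar>" unfolding a_def a'_def power2_eq_square abs_mult
    using nx nx' c by (intro mult_mono) auto
  have ht: "\<bar>p / a - p' / a'\<bar> \<le> 20 / c\<^sup>2 * \<delta>"
  proof -
    have a0: "a \<noteq> 0" "a' \<noteq> 0" using nx nx' c unfolding a_def a'_def by auto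
    have "p / a - p' / a' = (p * (a' - a) + a * (p - p')) / (a * a')"
      using a0 by (simp add: field_simps)
    then have "\<bar>p / a - p' / a'\<bar> = \<bar>p * (a' - a) + a * (p - p')\<bar> / \<bar>a * a'\<bar>" by simp
    also have "\<dots> \<le> (8 * \<delta> + 2 * (6 * \<delta>)) / c\<^sup>2"
    proof (rule frac_le)
      have "\<bar>p * (a' - a) + a * (p - p')\<bar> \<le> \<bar>p\<bar> * \<bar>a' - a\<bar> + \<bar>a\<bar> * \<bar>p - p'\<bar>"
        by (simp add: abs_mult[symmetric] abs_triangle_ineq)
      also have "\<dots> \<le> 8 * \<delta> + 2 * (6 * \<delta>)"
        using hp haa ha hpp by (intro add_mono mult_mono) auto
      finally show "\<bar>p * (a' - a) + a * (p - p')\<bar> \<le> 8 * \<delta> + 2 * (6 * \<delta>)" .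
      show "0 \<le> 8 * \<delta> + 2 * (6 * \<delta>)" unfolding \<delta>_def by simp
      show "0 < c\<^sup>2" using c by simp
    qed (rule cc)
    finally show ?thesis by simp
  qed
  have "phi i u - phi i v = (x - x', y - y') - (0, (p / a - p' / a') *\<^sub>R axis i 1)"
    unfolding phi_def uxy vxy p_def p'_def a_def a'_def by (simp add: algebra_simps)
  then have "dist (phi i u) (phi i v) \<le> norm (x - x', y - y') + norm ((0::real^'n), (p / a - p' / a') *\<^sub>R axis i (1::real))"
    unfolding dist_norm by (metis norm_triangle_ineq4)
  also have "norm (x - x', y - y') = \<delta>" unfolding \<delta>_def uxy vxy by (simp add: dist_norm)
  also have "norm ((0::real^'n), (p / a - p' / a') *\<^sub>R axis i (1::real)) = \<bar>p / a - p' / a'\<bar>"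
    by simp
  finally have "dist (phi i u) (phi i v) \<le> \<delta> + 20 / c\<^sup>2 * \<delta>" using ht by linarith
  then show ?thesis unfolding \<delta>_def by (simp add: algebra_simps)
qed

lemma phi_inv:
  fixes i :: "'n::finite" and w :: "(real^'n) \<times> (real^'n)"
  assumes "fst w \<bullet> snd w = 0" "fst w $ i \<noteq> 0"
  shows "phi i (fst w, snd w - (snd w $ i) *\<^sub>R axis i 1) = w"
proof -
  have "fst w \<bullet> (snd w - (snd w $ i) *\<^sub>R axis i 1) = - (snd w $ i * fst w $ i)"
    using assms(1) by (simp add: inner_diff_right inner_axis)
  then show ?thesis using assms(2) unfolding phi_def by (simp add: prod_eq_iff)
qed

definition shell :: "real \<Rightarrow> ((real^'n::finite) \<times> (real^'n)) set" where
  "shell lam = Sigma_star \<inter> {z. lam \<le> norm z \<and> norm z \<le> 2 * lam}"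

definition pA :: "'n::finite \<Rightarrow> real \<Rightarrow> real \<Rightarrow> ((real^'n) \<times> (real^'n)) set" where
  "pA i c lam = shell lam \<inter> {z. c * norm z \<le> \<bar>fst z $ i\<bar>}"

definition pB :: "'n::finite \<Rightarrow> real \<Rightarrow> real \<Rightarrow> ((real^'n) \<times> (real^'n)) set" where
  "pB i c lam = shell lam \<inter> {z. c * norm z \<le> \<bar>snd z $ i\<bar>}"

lemma pA_sub:
  fixes i :: "'n::finite"
  assumes c: "c > 0" and lam: "lam > 0"
  shows "pA i c lam \<subseteq> (\<lambda>u. lam *\<^sub>R phi i u) ` Dom i c"
proof
  fix z assume z: "z \<in> pA i c lam"
  obtain x y where zxy: "z = (x, y)" by (cases z)
  have xy: "x \<bullet> y = 0" and nz1: "lam \<le> norm z" and nz2: "norm z \<le> 2 * lam" and ci: "c * norm z \<le> \<bar>x $ i\<bar>"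
    using z unfolding pA_def shell_def Sigma_star_def zxy by auto
  define w where "w = (1 / lam) *\<^sub>R z"
  have nw: "norm w \<le> 2" unfolding w_def using nz2 lam by (simp add: field_simps)
  have fw: "fst w = (1/lam) *\<^sub>R x" "snd w = (1/lam) *\<^sub>R y" unfolding w_def zxy by auto
  have w0: "fst w \<bullet> snd w = 0" unfolding fw using xy by simp
  have "c \<le> c * norm z / lam" using c nz1 lam by (simp add: field_simps)
  also have "\<dots> \<le> \<bar>x $ i\<bar> / lam" using ci lam by (simp add: divide_right_mono)
  also have "\<dots> = \<bar>fst w $ i\<bar>" unfolding fw using lam by simp
  finally have cw: "c \<le> \<bar>fst w $ i\<bar>" .
  have wi: "fst w $ i \<noteq> 0" using cw c by auto
  define u where "u = (fst w, snd w - (snd w $ i) *\<^sub>R axis i 1)"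
  have "norm (fst w) \<le> 2" using norm_fst_le[of "fst w" "snd w"] nw by simp
  moreover have "norm (snd w) \<le> 2" using norm_snd_le[of "snd w" "fst w"] nw by simp
  moreover have "norm (snd u) \<le> norm (snd w) + \<bar>snd w $ i\<bar>" unfolding u_def
    using norm_triangle_ineq4[of "snd w" "(snd w $ i) *\<^sub>R axis i 1"] by simp
  moreover have "\<bar>snd w $ i\<bar> \<le> norm (snd w)" by (rule component_le_norm_cart)
  ultimately have "u \<in> Dom i c" unfolding Dom_def u_def using cw by auto
  moreover have "z = lam *\<^sub>R phi i u"
  proof -
    have "phi i u = w" unfolding u_def by (rule phi_inv[OF w0 wi])
    then show ?thesis unfolding w_def using lam by simp
  qed
  ultimately show "z \<in> (\<lambda>u. lam *\<^sub>R phi i u) ` Dom i c" by blast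
qed

lemma pB_sub:
  fixes i :: "'n::finite"
  assumes c: "c > 0" and lam: "lam > 0"
  shows "pB i c lam \<subseteq> (\<lambda>u. lam *\<^sub>R prod.swap (phi i u)) ` Dom i c"
proof
  fix z assume z: "z \<in> pB i c lam"
  obtain x y where zxy: "z = (x, y)" by (cases z)
  have nn: "norm (y, x) = norm (x, y)" by (rule norm_commute)
  have ii: "y \<bullet> x = x \<bullet> y" by (rule inner_commute)
  have "prod.swap z \<in> pA i c lam" using z unfolding pA_def pB_def shell_def Sigma_star_def zxy
    by (auto simp: nn ii zero_prod_def)
  then obtain u where u: "u \<in> Dom i c" "prod.swap z = lam *\<^sub>R phi i u" using pA_sub[OF c lam] by blast
  have "z = prod.swap (prod.swap z)" by simp
  also have "\<dots> = lam *\<^sub>R prod.swap (phi i u)" unfolding u(2) by (cases "phi i u") simp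
  finally show "z \<in> (\<lambda>u. lam *\<^sub>R prod.swap (phi i u)) ` Dom i c" using u(1) by blast
qed

lemma dist_scaleR_both: "dist (a *\<^sub>R x) (a *\<^sub>R y) = \<bar>a\<bar> * dist x (y::'a::real_normed_vector)"
  unfolding dist_norm scaleR_diff_right[symmetric] by simp

lemma dist_swap: "dist (prod.swap p) (prod.swap q) = dist p q"
  by (cases p, cases q) (simp add: dist_Pair_Pair dist_commute add.commute)


lemma good_pA:
  fixes i :: "'n::finite"
  assumes c: "c > 0" and lam: "lam > 0"
  shows "good (real (2 * CARD('n) - 1)) ((lam * (1 + 20 / c\<^sup>2)) powr real (2 * CARD('n) - 1) *
      (hausdorff_const (real (2 * CARD('n) - 1)) * (18 * real CARD('n)) ^ (2 * CARD('n) - 1))) (pA i c lam)"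
proof -
  have "CARD('n) \<ge> 1" by (simp add: Suc_leI)
  then have s: "real (2 * CARD('n) - 1) > 0" by linarith
  have "good (real (2 * CARD('n) - 1)) ((lam * (1 + 20 / c\<^sup>2)) powr real (2 * CARD('n) - 1) *
      (hausdorff_const (real (2 * CARD('n) - 1)) * (18 * real CARD('n)) ^ (2 * CARD('n) - 1))) ((\<lambda>u. lam *\<^sub>R phi i u) ` Dom i c)"
  proof (rule good_lip[OF good_mono[OF good_flat Dom_flat]])
    show "0 < lam * (1 + 20 / c\<^sup>2)" using lam c by (simp add: add_pos_nonneg)
    show "dist (lam *\<^sub>R phi i u) (lam *\<^sub>R phi i v) \<le> lam * (1 + 20 / c\<^sup>2) * dist u v" if "u \<in> Dom i c" "v \<in> Dom i c" for u v
      using phi_lip[OF c that] lam unfolding dist_scaleR_both by (simp add: mult.assoc mult_left_mono)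
  qed (rule s)
  then show ?thesis by (rule good_mono) (rule pA_sub[OF c lam])
qed

lemma good_pB:
  fixes i :: "'n::finite"
  assumes c: "c > 0" and lam: "lam > 0"
  shows "good (real (2 * CARD('n) - 1)) ((lam * (1 + 20 / c\<^sup>2)) powr real (2 * CARD('n) - 1) *
      (hausdorff_const (real (2 * CARD('n) - 1)) * (18 * real CARD('n)) ^ (2 * CARD('n) - 1))) (pB i c lam)"
proof -
  have "CARD('n) \<ge> 1" by (simp add: Suc_leI)
  then have s: "real (2 * CARD('n) - 1) > 0" by linarith
  have "good (real (2 * CARD('n) - 1)) ((lam * (1 + 20 / c\<^sup>2)) powr real (2 * CARD('n) - 1) *
      (hausdorff_const (real (2 * CARD('n) - 1)) * (18 * real CARD('n)) ^ (2 * CARD('n) - 1))) ((\<lambda>u. lam *\<^sub>R prod.swap (phi i u)) ` Dom i c)"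
  proof (rule good_lip[OF good_mono[OF good_flat Dom_flat]])
    show "0 < lam * (1 + 20 / c\<^sup>2)" using lam c by (simp add: add_pos_nonneg)
    show "dist (lam *\<^sub>R prod.swap (phi i u)) (lam *\<^sub>R prod.swap (phi i v)) \<le> lam * (1 + 20 / c\<^sup>2) * dist u v" if "u \<in> Dom i c" "v \<in> Dom i c" for u v
      using phi_lip[OF c that] lam unfolding dist_scaleR_both dist_swap by (simp add: mult.assoc mult_left_mono)
  qed (rule s)
  then show ?thesis by (rule good_mono) (rule pB_sub[OF c lam])
qed

lemma shell_cover:
  fixes z :: "(real^'n::finite) \<times> (real^'n)"
  assumes z: "z \<in> shell lam"
  shows "\<exists>i. z \<in> pA i (1 / (2 * CARD('n))) lam \<or> z \<in> pB i (1 / (2 * CARD('n))) lam"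
proof (rule ccontr)
  define c :: real where "c = 1 / (2 * CARD('n))"
  assume "\<not> ?thesis"
  then have lt: "\<bar>fst z $ i\<bar> < c * norm z" "\<bar>snd z $ i\<bar> < c * norm z" for i
    using z unfolding pA_def pB_def c_def by (auto simp: not_le)
  have "norm z \<le> norm (fst z) + norm (snd z)" using norm_Pair_le[of "fst z" "snd z"] by simp
  also have "\<dots> \<le> (\<Sum>j\<in>UNIV. \<bar>fst z $ j\<bar>) + (\<Sum>j\<in>UNIV. \<bar>snd z $ j\<bar>)"
    by (intro add_mono norm_le_l1_cart)
  also have "\<dots> < (\<Sum>j\<in>(UNIV::'n set). c * norm z) + (\<Sum>j\<in>(UNIV::'n set). c * norm z)"
    using lt by (intro add_strict_mono sum_strict_mono) auto
  also have "\<dots> = norm z" unfolding c_def by simp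
  finally show False by simp
qed



lemma sets_surf: "sets (surf_measure :: ((real^'n::finite) \<times> (real^'n)) measure) = sets borel"
  unfolding surf_measure_def hausdorff_measure_def sets_measure_of_conv
  using sets.sigma_sets_eq[of borel] by simp

lemma emeasure_surf_le:
  assumes "A \<in> sets borel"
  shows "emeasure (surf_measure :: ((real^'n::finite) \<times> (real^'n)) measure) A \<le> hausdorff_outer (real (2 * CARD('n) - 1)) A"
  unfolding surf_measure_def hausdorff_measure_def emeasure_measure_of_conv
  using assms sets.sigma_sets_eq[of borel] by simp

lemma Sigma_star_borel: "(Sigma_star :: ((real^'n::finite) \<times> (real^'n)) set) \<in> sets borel"
proof -
  have "Sigma_star = {z :: (real^'n) \<times> (real^'n). fst z \<bullet> snd z = 0} - {0}"
    unfolding Sigma_star_def by auto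
  also have "\<dots> \<in> sets borel"
    by (intro sets.Diff borel_closed closed_Collect_eq) (auto intro!: continuous_intros)
  finally show ?thesis .
qed

lemma shell_borel: "(shell lam :: ((real^'n::finite) \<times> (real^'n)) set) \<in> sets borel"
  unfolding shell_def
  by (intro sets.Int Sigma_star_borel borel_closed closed_Collect_conj closed_Collect_le) (auto intro!: continuous_intros)

lemma pA_borel: "(pA i c lam :: ((real^'n::finite) \<times> (real^'n)) set) \<in> sets borel"
  unfolding pA_def
  by (intro sets.Int shell_borel borel_closed closed_Collect_le) (auto intro!: continuous_intros)

lemma pB_borel: "(pB i c lam :: ((real^'n::finite) \<times> (real^'n)) set) \<in> sets borel"
  unfolding pB_def
  by (intro sets.Int shell_borel borel_closed closed_Collect_le) (auto intro!: continuous_intros)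

definition Kc :: "'n::finite itself \<Rightarrow> real" where
  "Kc _ = 2 * real CARD('n) * (1 + 20 / (1 / (2 * real CARD('n)))\<^sup>2) powr real (2 * CARD('n) - 1) *
      (hausdorff_const (real (2 * CARD('n) - 1)) * (18 * real CARD('n)) ^ (2 * CARD('n) - 1))"

lemma emeasure_shell:
  assumes lam: "lam > 0"
  shows "emeasure (surf_measure :: ((real^'n::finite) \<times> (real^'n)) measure) (shell lam)
     \<le> ennreal (lam powr real (2 * CARD('n) - 1) * Kc TYPE('n))"
proof -
  define c :: real where "c = 1 / (2 * real CARD('n))"
  have c: "c > 0" unfolding c_def by simp
  define s where "s = real (2 * CARD('n) - 1)"
  define K where "K = (lam * (1 + 20 / c\<^sup>2)) powr s *
      (hausdorff_const s * (18 * real CARD('n)) ^ (2 * CARD('n) - 1))"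
  define P :: "bool \<times> 'n \<Rightarrow> ((real^'n) \<times> (real^'n)) set" where
    "P p = (if fst p then pA (snd p) c lam else pB (snd p) c lam)" for p
  have "shell lam \<subseteq> (\<Union>p\<in>UNIV. P p)"
  proof
    fix z assume "z \<in> (shell lam :: ((real^'n) \<times> (real^'n)) set)"
    from shell_cover[OF this] obtain i where "z \<in> pA i c lam \<or> z \<in> pB i c lam"
      unfolding c_def by auto
    then have "z \<in> P (True, i) \<or> z \<in> P (False, i)" unfolding P_def by simp
    then show "z \<in> (\<Union>p\<in>UNIV. P p)" by blast
  qed
  then have "emeasure (surf_measure :: ((real^'n::finite) \<times> (real^'n)) measure) (shell lam)
      \<le> emeasure surf_measure (\<Union>p\<in>UNIV. P p)"
  proof (rule emeasure_mono)
    have "P p \<in> sets borel" for p unfolding P_def by (simp add: pA_borel pB_borel)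
    then show "(\<Union>p\<in>UNIV. P p) \<in> sets surf_measure" unfolding sets_surf
      by (intro sets.finite_UN) auto
  qed
  also have "\<dots> \<le> (\<Sum>p\<in>UNIV. emeasure surf_measure (P p))"
    by (intro emeasure_subadditive_finite) (auto simp: sets_surf P_def pA_borel pB_borel)
  also have "\<dots> \<le> (\<Sum>p\<in>(UNIV :: (bool \<times> 'n) set). ennreal K)"
  proof (intro sum_mono)
    fix p :: "bool \<times> 'n"
    have "emeasure (surf_measure :: ((real^'n::finite) \<times> (real^'n)) measure) (P p) \<le> hausdorff_outer s (P p)"
      unfolding s_def by (intro emeasure_surf_le) (auto simp: P_def pA_borel pB_borel)
    also have "\<dots> \<le> ennreal K"
      unfolding P_def K_def s_def using good_pA[OF c lam] good_pB[OF c lam]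
      by (auto intro: good_outer)
    finally show "emeasure (surf_measure :: ((real^'n::finite) \<times> (real^'n)) measure) (P p) \<le> ennreal K" .
  qed
  also have "\<dots> = ennreal (2 * real CARD('n) * K)"
    by (simp add: ennreal_of_nat_eq_real_of_nat ennreal_mult' card_UNIV_bool)
  also have "2 * real CARD('n) * K = lam powr s * Kc TYPE('n)"
    unfolding K_def Kc_def c_def s_def using lam by (simp add: powr_mult)
  finally show ?thesis unfolding s_def .
qed



lemma japanese_ge: "japanese z \<ge> 1" "japanese z \<ge> norm z"
  unfolding japanese_def by (auto intro: real_le_rsqrt)

lemma w_bound:
  fixes z :: "(real^'n::finite) \<times> (real^'n)"
  assumes lam: "lam > 0" and z: "z \<in> shell lam" and r: "r > 0"
  shows "japanese z powr (-r) / norm z \<le> lam powr (-r-1)"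
    and "japanese z powr (-r) / norm z \<le> 1 / lam"
proof -
  have nz: "lam \<le> norm z" using z unfolding shell_def by auto
  have j1: "japanese z powr (-r) \<le> 1"
    using powr_mono2'[of "-r" 1 "japanese z"] japanese_ge(1)[of z] r by simp
  have j2: "japanese z powr (-r) \<le> lam powr (-r)"
    using powr_mono2'[of "-r" lam "japanese z"] japanese_ge(2)[of z] nz lam r by simp
  have jn: "japanese z powr (-r) \<ge> 0" by simp
  show "japanese z powr (-r) / norm z \<le> 1 / lam"
    using j1 jn nz lam by (intro frac_le) auto
  have "japanese z powr (-r) / norm z \<le> lam powr (-r) / lam"
    using j2 jn nz lam by (intro frac_le) auto
  also have "\<dots> = lam powr (-r-1)" using lam by (simp add: powr_diff)
  finally show "japanese z powr (-r) / norm z \<le> lam powr (-r-1)" .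
qed

lemma shell_index:
  fixes z :: "(real^'n::finite) \<times> (real^'n)"
  assumes z: "z \<in> Sigma_star"
  shows "(\<exists>n::nat. z \<in> shell (2 powr real n)) \<or> (\<exists>n::nat. z \<in> shell (2 powr (- real (Suc n))))"
proof -
  have t: "norm z > 0" using z unfolding Sigma_star_def by auto
  define m where "m = \<lfloor>log 2 (norm z)\<rfloor>"
  have m: "2 powr m \<le> norm z" "norm z < 2 powr (m + 1)"
    using floor_log_eq_powr_iff[OF t, of 2 m] m_def by auto
  have "2 powr (m + 1) = 2 * 2 powr m" by (simp add: powr_add)
  then have zs: "z \<in> shell (2 powr m)" using m z unfolding shell_def by auto
  show ?thesis
  proof (cases "m \<ge> 0")
    case True
    then have "real_of_int m = real (nat m)" by simp
    then show ?thesis using zs by metis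
  next
    case False
    then have "real_of_int m = - real (Suc (nat (- m - 1)))" by simp
    then show ?thesis using zs by metis
  qed
qed

lemma Kc_nonneg: "Kc TYPE('n::finite) \<ge> 0"
proof -
  have "CARD('n) \<ge> 1" by (simp add: Suc_leI)
  then have s: "real (2 * CARD('n) - 1) > 0" by linarith
  show ?thesis unfolding Kc_def using hc_nonneg[OF s] by simp
qed

lemma two_powr_nat: "(2::real) powr (real n * x) = (2 powr x) ^ n"
  by (simp add: powr_realpow[symmetric] powr_powr mult.commute)

lemma ennreal_le_suminf: "f n \<le> (\<Sum>n. f n :: ennreal)"
  using sum_le_suminf[of f "{n}"] by simp

lemma E1: "(2 powr real n) powr (-r-1) * ((2 powr real n) powr s * K) = K * (2 powr (s - r - 1)) ^ n"
proof -
  have "(2 powr real n) powr (-r-1) * ((2 powr real n) powr s * K) = K * (2 powr (real n * (-r-1)) * 2 powr (real n * s))"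
    by (simp add: powr_powr)
  also have "2 powr (real n * (-r-1)) * 2 powr (real n * s) = (2::real) powr (real n * (s - r - 1))"
    by (simp add: powr_add[symmetric] algebra_simps)
  finally show ?thesis by (simp add: two_powr_nat)
qed

lemma E2: "2 powr real (Suc n) * ((2 powr (- real (Suc n))) powr s * K) = K * (2 powr (1 - s)) ^ (Suc n)"
proof -
  have "(2 powr (- real (Suc n))) powr s = (2::real) powr (real (Suc n) * (- s))"
    by (simp only: powr_powr) (simp add: algebra_simps)
  then have "2 powr real (Suc n) * ((2 powr (- real (Suc n))) powr s * K) = K * (2 powr real (Suc n) * 2 powr (real (Suc n) * (- s)))"
    by simp
  also have "2 powr real (Suc n) * 2 powr (real (Suc n) * (- s)) = (2::real) powr (real (Suc n) * (1 - s))"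
    by (simp add: powr_add[symmetric] algebra_simps)
  finally show ?thesis by (simp only: two_powr_nat)
qed

definition wfun :: "real \<Rightarrow> (real^'n::finite) \<times> (real^'n) \<Rightarrow> real" where
  "wfun r z = indicator Sigma_star z * (japanese z powr (-r) / norm z)"

lemma wfun_nonneg: "wfun r z \<ge> 0"
  unfolding wfun_def by (simp add: indicator_def)

lemma wfun_measurable: "wfun r \<in> borel_measurable (surf_measure :: ((real^'n::finite) \<times> (real^'n)) measure)"
proof -
  have [measurable]: "(Sigma_star :: ((real^'n::finite) \<times> (real^'n)) set) \<in> sets borel" by (rule Sigma_star_borel)
  have "wfun r \<in> borel_measurable (borel :: ((real^'n::finite) \<times> (real^'n)) measure)"
    unfolding wfun_def japanese_def by measurable
  then show ?thesis using measurable_cong_sets[OF sets_surf refl] by blast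
qed

lemma wfun_integrable:
  assumes d2: "CARD('n::finite) \<ge> 2" and r: "r > 2 * real CARD('n) - 2"
  shows "integrable (surf_measure :: ((real^'n) \<times> (real^'n)) measure) (wfun r)"
proof (rule integrableI_bounded[OF wfun_measurable])
  define s where "s = real (2 * CARD('n) - 1)"
  define K where "K = Kc TYPE('n)"
  have K: "K \<ge> 0" unfolding K_def by (rule Kc_nonneg)
  have r0: "r > 0" using r d2 by linarith
  have s1: "s > 1" unfolding s_def using d2 by linarith
  have srr: "s - r - 1 < 0" unfolding s_def using r d2 by linarith
  define q1 :: real where "q1 = 2 powr (s - r - 1)"
  define q2 :: real where "q2 = 2 powr (1 - s)"
  have q1: "q1 < 1" "q1 > 0" unfolding q1_def using srr by (auto intro: powr_less_one)
  have q2: "q2 < 1" "q2 > 0" unfolding q2_def using s1 by (auto intro: powr_less_one)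
  define To :: "nat \<Rightarrow> ((real^'n) \<times> (real^'n)) set" where "To n = shell (2 powr real n)" for n
  define Ti :: "nat \<Rightarrow> ((real^'n) \<times> (real^'n)) set" where "Ti n = shell (2 powr (- real (Suc n)))" for n
  define f where "f n z = ennreal ((2 powr real n) powr (-r-1)) * indicator (To n) z
      + ennreal (2 powr real (Suc n)) * indicator (Ti n) z" for n z
  have pw: "ennreal (wfun r z) \<le> (\<Sum>n. f n z)" for z
  proof (cases "z \<in> Sigma_star")
    case False then show ?thesis unfolding wfun_def by simp
  next
    case True
    then have wz: "wfun r z = japanese z powr (-r) / norm z" unfolding wfun_def by simp
    from shell_index[OF True] show ?thesis
    proof
      assume "\<exists>n. z \<in> shell (2 powr real n)"
      then obtain n where n: "z \<in> To n" unfolding To_def by auto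
      have "ennreal (wfun r z) \<le> ennreal ((2 powr real n) powr (-r-1))"
        unfolding wz using w_bound(1)[of "2 powr real n" z r] n r0 unfolding To_def by (simp add: ennreal_leI)
      also have "\<dots> \<le> f n z" unfolding f_def using n by simp
      also have "\<dots> \<le> (\<Sum>n. f n z)" by (rule ennreal_le_suminf)
      finally show ?thesis .
    next
      assume "\<exists>n. z \<in> shell (2 powr (- real (Suc n)))"
      then obtain n where n: "z \<in> Ti n" unfolding Ti_def by auto
      have "ennreal (wfun r z) \<le> ennreal (1 / 2 powr (- real (Suc n)))"
        unfolding wz using w_bound(2)[of "2 powr (- real (Suc n))" z r] n r0 unfolding Ti_def by (simp add: ennreal_leI)
      also have "1 / 2 powr (- real (Suc n)) = (2::real) powr real (Suc n)"
        by (simp only: powr_minus divide_inverse mult_1 inverse_inverse_eq)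
      also have "ennreal \<dots> \<le> f n z" unfolding f_def using n by simp
      also have "\<dots> \<le> (\<Sum>n. f n z)" by (rule ennreal_le_suminf)
      finally show ?thesis .
    qed
  qed
  have fm: "f n \<in> borel_measurable surf_measure" for n
  proof -
    have [measurable]: "To n \<in> sets borel" "Ti n \<in> sets borel" unfolding To_def Ti_def by (simp_all add: shell_borel)
    have "f n \<in> borel_measurable borel" unfolding f_def by measurable
    then show ?thesis using measurable_cong_sets[OF sets_surf refl] by blast
  qed
  have fi: "integral\<^sup>N surf_measure (f n) \<le> ennreal (K * q1 ^ n + K * q2 * q2 ^ n)" for n
  proof -
    have mT: "To n \<in> sets surf_measure" "Ti n \<in> sets surf_measure"
      unfolding sets_surf To_def Ti_def by (simp_all add: shell_borel)
    have "integral\<^sup>N surf_measure (f n) = ennreal ((2 powr real n) powr (-r-1)) * emeasure surf_measure (To n)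
        + ennreal (2 powr real (Suc n)) * emeasure surf_measure (Ti n)"
      unfolding f_def using mT by (simp add: nn_integral_add nn_integral_cmult_indicator)
    also have "\<dots> \<le> ennreal ((2 powr real n) powr (-r-1)) * ennreal ((2 powr real n) powr s * K)
        + ennreal (2 powr real (Suc n)) * ennreal ((2 powr (- real (Suc n))) powr s * K)"
      unfolding To_def Ti_def s_def K_def by (intro add_mono mult_left_mono emeasure_shell) auto
    also have "\<dots> = ennreal (K * q1 ^ n) + ennreal (K * q2 ^ Suc n)"
    proof -
      have e1: "ennreal ((2 powr real n) powr (-r-1)) * ennreal ((2 powr real n) powr s * K) = ennreal ((2 powr real n) powr (-r-1) * ((2 powr real n) powr s * K))"
        by (rule ennreal_mult'[symmetric]) simp
      have e2: "ennreal (2 powr real (Suc n)) * ennreal ((2 powr (- real (Suc n))) powr s * K) = ennreal (2 powr real (Suc n) * ((2 powr (- real (Suc n))) powr s * K))"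
        by (rule ennreal_mult'[symmetric]) simp
      show ?thesis
        unfolding e1 e2 q1_def q2_def by (simp only: E1 E2)
    qed
    also have "\<dots> = ennreal (K * q1 ^ n + K * q2 ^ Suc n)"
      by (rule ennreal_plus[symmetric]) (use K q1 q2 in auto)
    also have "K * q2 ^ Suc n = K * q2 * q2 ^ n" by (simp add: mult.assoc)
    finally show ?thesis .
  qed
  have summ: "summable (\<lambda>n. K * q1 ^ n + K * q2 * q2 ^ n)"
    using q1 q2 by (intro summable_add summable_mult summable_geometric) auto
  have "(\<integral>\<^sup>+ z. ennreal (norm (wfun r z)) \<partial>(surf_measure :: ((real^'n) \<times> (real^'n)) measure)) = (\<integral>\<^sup>+ z. ennreal (wfun r z) \<partial>(surf_measure :: ((real^'n) \<times> (real^'n)) measure))"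
  proof -
    have "\<And>z :: (real^'n) \<times> (real^'n). \<bar>wfun r z\<bar> = wfun r z" using wfun_nonneg abs_of_nonneg by blast
    then show ?thesis by simp
  qed
  also have "\<dots> \<le> (\<integral>\<^sup>+ z. (\<Sum>n. f n z) \<partial>surf_measure)"
    by (intro nn_integral_mono pw)
  also have "\<dots> = (\<Sum>n. integral\<^sup>N surf_measure (f n))"
    by (rule nn_integral_suminf[OF fm])
  also have "\<dots> \<le> (\<Sum>n. ennreal (K * q1 ^ n + K * q2 * q2 ^ n))"
    by (intro suminf_le[OF fi summableI summableI])
  also have "\<dots> = ennreal (\<Sum>n. K * q1 ^ n + K * q2 * q2 ^ n)"
    using K q1 q2 summ by (intro suminf_ennreal2) auto
  also have "\<dots> < \<infinity>" by simp
  finally show "(\<integral>\<^sup>+ z. ennreal (norm (wfun r z)) \<partial>(surf_measure :: ((real^'n) \<times> (real^'n)) measure)) < \<infinity>" .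
qed



lemma japanese_pos: "japanese z > 0"
  using japanese_ge(1)[of z] by linarith

lemma Cr_bound:
  assumes "h \<in> Cr_space r"
  shows "cmod (h z) \<le> Cr_norm r h * japanese z powr (-r)"
proof -
  have bdd: "bdd_above (range (\<lambda>z. cmod (h z) * japanese z powr r))"
    using assms unfolding Cr_space_def by auto
  have "cmod (h z) * japanese z powr r \<le> Cr_norm r h"
    unfolding Cr_norm_def by (rule cSUP_upper[OF _ bdd]) simp
  then have "cmod (h z) * japanese z powr r * japanese z powr (-r) \<le> Cr_norm r h * japanese z powr (-r)"
    by (rule mult_right_mono) simp
  also have "cmod (h z) * japanese z powr r * japanese z powr (-r) = cmod (h z)"
    using japanese_pos[of z] by (simp add: mult.assoc powr_add[symmetric])
  finally show ?thesis .
qed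

lemma Cr_norm_nonneg:
  assumes "h \<in> Cr_space r"
  shows "Cr_norm r h \<ge> 0"
proof -
  have bdd: "bdd_above (range (\<lambda>z. cmod (h z) * japanese z powr r))"
    using assms unfolding Cr_space_def by auto
  show ?thesis unfolding Cr_norm_def by (rule cSUP_upper2[OF bdd, of 0]) auto
qed

lemma Cr_diff:
  assumes f: "f \<in> Cr_space r" and g: "g \<in> Cr_space r"
  shows "(\<lambda>z. g z - f z) \<in> Cr_space r"
  unfolding Cr_space_def
proof (intro CollectI conjI)
  show "continuous_on UNIV (\<lambda>z. g z - f z)"
    using f g unfolding Cr_space_def by (auto intro: continuous_on_diff)
  show "bdd_above (range (\<lambda>z. cmod (g z - f z) * japanese z powr r))"
  proof (rule bdd_aboveI2)
    fix z
    have "cmod (g z - f z) * japanese z powr r \<le> (cmod (g z) + cmod (f z)) * japanese z powr r"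
      by (intro mult_right_mono norm_triangle_ineq4) simp
    also have "\<dots> = cmod (g z) * japanese z powr r + cmod (f z) * japanese z powr r"
      by (simp add: algebra_simps)
    also have "\<dots> \<le> Cr_norm r g + Cr_norm r f"
      using f g unfolding Cr_space_def Cr_norm_def
      by (intro add_mono cSUP_upper) auto
    finally show "cmod (g z - f z) * japanese z powr r \<le> Cr_norm r g + Cr_norm r f" .
  qed
qed

lemma integ_Cr:
  assumes d2: "CARD('n::finite) \<ge> 2" and r: "r > 2 * real CARD('n) - 2"
    and h: "h \<in> Cr_space r"
  shows "integrable (surf_measure :: ((real^'n) \<times> (real^'n)) measure)
     (\<lambda>z. indicator Sigma_star z *\<^sub>R (h z / complex_of_real (norm z)))"
    and "\<And>z. norm (indicator Sigma_star z *\<^sub>R (h z / complex_of_real (norm z))) \<le> Cr_norm r h * wfun r z"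
proof -
  show nb: "norm (indicator Sigma_star z *\<^sub>R (h z / complex_of_real (norm z))) \<le> Cr_norm r h * wfun r z" for z
  proof (cases "z \<in> Sigma_star")
    case False then show ?thesis unfolding wfun_def by simp
  next
    case True
    have "norm (indicator Sigma_star z *\<^sub>R (h z / complex_of_real (norm z))) = cmod (h z) / norm z"
      using True by (simp add: norm_divide)
    also have "\<dots> \<le> Cr_norm r h * japanese z powr (-r) / norm z"
      by (intro divide_right_mono Cr_bound[OF h]) simp
    also have "\<dots> = Cr_norm r h * wfun r z" unfolding wfun_def using True by simp
    finally show ?thesis .
  qed
  have hm: "h \<in> borel_measurable borel"
    using h unfolding Cr_space_def by (auto intro: borel_measurable_continuous_onI)
  have [measurable]: "(Sigma_star :: ((real^'n::finite) \<times> (real^'n)) set) \<in> sets borel" by (rule Sigma_star_borel)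
  have "(\<lambda>z. indicator Sigma_star z *\<^sub>R (h z / complex_of_real (norm z))) \<in> borel_measurable (borel :: ((real^'n) \<times> (real^'n)) measure)"
    using hm by measurable
  then have m: "(\<lambda>z. indicator Sigma_star z *\<^sub>R (h z / complex_of_real (norm z))) \<in> borel_measurable (surf_measure :: ((real^'n) \<times> (real^'n)) measure)"
    using measurable_cong_sets[OF sets_surf refl] by blast
  show "integrable (surf_measure :: ((real^'n) \<times> (real^'n)) measure)
     (\<lambda>z. indicator Sigma_star z *\<^sub>R (h z / complex_of_real (norm z)))"
  proof (rule Bochner_Integration.integrable_bound[OF _ m])
    show "integrable (surf_measure :: ((real^'n) \<times> (real^'n)) measure) (\<lambda>z. Cr_norm r h * wfun r z)"
      using wfun_integrable[OF d2 r] by simp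
    show "AE z in surf_measure. norm (indicator Sigma_star z *\<^sub>R (h z / complex_of_real (norm z))) \<le> norm (Cr_norm r h * wfun r z)"
      using nb by (intro AE_I2) (smt (verit) real_norm_def)
  qed
qed



lemma functional_bound:
  assumes d2: "CARD('n::finite) \<ge> 2" and r: "r > 2 * real CARD('n) - 2"
    and h: "h \<in> Cr_space r"
  shows "cmod (Sigma_functional (h :: (real^'n) \<times> (real^'n) \<Rightarrow> complex))
     \<le> Cr_norm r h * integral\<^sup>L (surf_measure :: ((real^'n) \<times> (real^'n)) measure) (wfun r)"
proof -
  have "cmod (Sigma_functional h) \<le> integral\<^sup>L (surf_measure :: ((real^'n) \<times> (real^'n)) measure) (\<lambda>z. Cr_norm r h * wfun r z)"
    unfolding Sigma_functional_def set_lebesgue_integral_def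
    by (rule Bochner_Integration.integral_norm_bound_integral[OF integ_Cr(1)[OF d2 r h] _ integ_Cr(2)[OF d2 r h]])
      (use wfun_integrable[OF d2 r] in simp)
  then show ?thesis by simp
qed

theorem proposition3p4:
  fixes r :: real
  assumes "CARD('n::finite) \<ge> 2"
    and "r > 2 * real CARD('n) - 2"
  shows "(\<forall>f \<in> Cr_space r.
            set_integrable (surf_measure :: ((real^'n) \<times> (real^'n)) measure) Sigma_star
              (\<lambda>z. f z / complex_of_real (norm z)))
       \<and> (\<forall>f \<in> Cr_space r. \<forall>g \<in> Cr_space r. \<forall>a b :: complex.
            Sigma_functional (\<lambda>z :: (real^'n) \<times> (real^'n). a * f z + b * g z)
              = a * Sigma_functional f + b * Sigma_functional g)
       \<and> (\<forall>f \<in> Cr_space r. \<forall>\<epsilon>>0. \<exists>\<delta>>0. \<forall>g \<in> Cr_space r.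
            Cr_norm r (\<lambda>z :: (real^'n) \<times> (real^'n). g z - f z) < \<delta> \<longrightarrow>
              cmod (Sigma_functional g - Sigma_functional f) < \<epsilon>)"
proof -
  note d2 = assms(1) and r = assms(2)
  have I: "\<forall>f \<in> Cr_space r.
            set_integrable (surf_measure :: ((real^'n) \<times> (real^'n)) measure) Sigma_star
              (\<lambda>z. f z / complex_of_real (norm z))"
    unfolding set_integrable_def using integ_Cr(1)[OF d2 r] by blast
  have L: "\<forall>f \<in> Cr_space r. \<forall>g \<in> Cr_space r. \<forall>a b :: complex.
            Sigma_functional (\<lambda>z :: (real^'n) \<times> (real^'n). a * f z + b * g z)
              = a * Sigma_functional f + b * Sigma_functional g"
  proof (intro ballI allI)
    fix f g :: "(real^'n) \<times> (real^'n) \<Rightarrow> complex" and a b :: complex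
    assume f: "f \<in> Cr_space r" and g: "g \<in> Cr_space r"
    define F where "F z = indicator Sigma_star z *\<^sub>R (f z / complex_of_real (norm z))" for z
    define G where "G z = indicator Sigma_star z *\<^sub>R (g z / complex_of_real (norm z))" for z
    have iF: "integrable (surf_measure :: ((real^'n) \<times> (real^'n)) measure) F"
      unfolding F_def by (rule integ_Cr(1)[OF d2 r f])
    have iG: "integrable (surf_measure :: ((real^'n) \<times> (real^'n)) measure) G"
      unfolding G_def by (rule integ_Cr(1)[OF d2 r g])
    have eq: "(\<lambda>z. indicator Sigma_star z *\<^sub>R ((a * f z + b * g z) / complex_of_real (norm z))) = (\<lambda>z. a * F z + b * G z)"
      unfolding F_def G_def by (rule ext) (simp add: indicator_def add_divide_distrib)
    have "Sigma_functional (\<lambda>z :: (real^'n) \<times> (real^'n). a * f z + b * g z)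
        = integral\<^sup>L surf_measure (\<lambda>z. a * F z + b * G z)"
      unfolding Sigma_functional_def set_lebesgue_integral_def eq ..
    also have "\<dots> = a * integral\<^sup>L surf_measure F + b * integral\<^sup>L surf_measure G"
      using iF iG by simp
    also have "\<dots> = a * Sigma_functional f + b * Sigma_functional g"
      unfolding Sigma_functional_def set_lebesgue_integral_def F_def G_def ..
    finally show "Sigma_functional (\<lambda>z :: (real^'n) \<times> (real^'n). a * f z + b * g z)
              = a * Sigma_functional f + b * Sigma_functional g" .
  qed
  have C: "\<forall>f \<in> Cr_space r. \<forall>\<epsilon>>0. \<exists>\<delta>>0. \<forall>g \<in> Cr_space r.
            Cr_norm r (\<lambda>z :: (real^'n) \<times> (real^'n). g z - f z) < \<delta> \<longrightarrow>
              cmod (Sigma_functional g - Sigma_functional f) < \<epsilon>"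
  proof (intro ballI allI impI)
    fix f :: "(real^'n) \<times> (real^'n) \<Rightarrow> complex" and \<epsilon> :: real
    assume f: "f \<in> Cr_space r" and e: "\<epsilon> > 0"
    define W where "W = integral\<^sup>L (surf_measure :: ((real^'n) \<times> (real^'n)) measure) (wfun r)"
    have W: "W \<ge> 0" unfolding W_def by (rule integral_nonneg_AE) (simp add: wfun_nonneg)
    define \<delta> where "\<delta> = \<epsilon> / (W + 1)"
    have dpos: "\<delta> > 0" unfolding \<delta>_def using e W by simp
    show "\<exists>\<delta>>0. \<forall>g \<in> Cr_space r.
            Cr_norm r (\<lambda>z :: (real^'n) \<times> (real^'n). g z - f z) < \<delta> \<longrightarrow>
              cmod (Sigma_functional g - Sigma_functional f) < \<epsilon>"
    proof (intro exI[of _ \<delta>] conjI ballI impI dpos)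
      fix g :: "(real^'n) \<times> (real^'n) \<Rightarrow> complex"
      assume g: "g \<in> Cr_space r" and lt: "Cr_norm r (\<lambda>z. g z - f z) < \<delta>"
      have hd: "(\<lambda>z. g z - f z) \<in> Cr_space r" by (rule Cr_diff[OF f g])
      have "Sigma_functional (\<lambda>z. 1 * g z + (-1) * f z) = 1 * Sigma_functional g + (-1) * Sigma_functional f"
        using L f g by blast
      then have "Sigma_functional g - Sigma_functional f = Sigma_functional (\<lambda>z. 1 * g z + (-1) * f z)"
        by simp
      also have "(\<lambda>z. 1 * g z + (-1) * f z) = (\<lambda>z. g z - f z)" by simp
      finally have "cmod (Sigma_functional g - Sigma_functional f) = cmod (Sigma_functional (\<lambda>z. g z - f z))"
        by simp
      also have "\<dots> \<le> Cr_norm r (\<lambda>z. g z - f z) * W"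
        unfolding W_def by (rule functional_bound[OF d2 r hd])
      also have "\<dots> \<le> \<delta> * W" using lt W by (intro mult_right_mono) auto
      also have "\<dots> < \<delta> * (W + 1)" using dpos by simp
      also have "\<dots> = \<epsilon>" unfolding \<delta>_def using W by simp
      finally show "cmod (Sigma_functional g - Sigma_functional f) < \<epsilon>" .
    qed
  qed
  show ?thesis using I L C by blast
qed


end
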